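(* Fix $k\in\mathbb{Z}_{\ge0}$. Let $\{K(\alpha)\}_{\alpha\in\mathfrak{c}\cup\{\mathfrak{c}\}}$ be a family of pairwise disjoint ubiquitously dense subsets of $[0,\infty)$, each of cardinality $\mathfrak{c}$, and for each $\alpha$ let $R(\alpha)$ be a $K(\alpha)$-gauge system on $\Omega$. Let $\mathbb{F}_{k,\alpha}=\{\tilde\Lambda^k[R(\alpha)](x,y)\mid x,y\in N(\Omega),\ x\neq y\}$. Then the set $\{1\}\cup\bigcup_{\alpha\in\mathfrak{c}\cup\{\mathfrak{c}\}}\mathbb{F}_{k,\alpha}$ is linearly independent over $\mathbb{Q}$ (i.e., every finite collection of distinct elements of it is linearly independent over $\mathbb{Q}$).
   Context: $\mathfrak{c}\cup\{\mathfrak{c}\}$ is the ordinal successor of $\mathfrak{c}$. A subset $S$ of $[0,\infty)$ is ubiquitously dense if $\operatorname{card}(U\cap S)=\operatorname{card}(S)$ for every non-empty open $U\subseteq[0,\infty)$. Fix a bijection $Q\colon\mathbb{Z}_{\ge0}\to\mathbb{Q}_{\ge0}$ with property (M): setting $\mu_m=\min Q^{-1}([m,m+1)\cap\mathbb{Q})$, we have $Q(\mu_m)=m$ and $\mu_m<\mu_{m+1}$ for all $m$. For a summable sequence $\alpha=(a_i)$ of positive reals and $B\subseteq\mathbb{Q}_{\ge0}$, $\langle\alpha,B\rangle=\sum_{i:\,Q(i)\in B}a_i$ ($=0$ if $B=\emptyset$). For $k\in\mathbb{Z}_{\ge0}$ let $F_k(n)=2^n+k$ and $\lambda^k_i=2^{-F_k(i)}$,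 $\lambda^k=(\lambda^k_i)_{i\ge0}$. $\Omega$ is a discrete space of cardinality $\mathfrak{c}$ and $N(\Omega)=\Omega^{\mathbb{Z}_{\ge0}}$ with the product topology. For $T\subseteq[0,\infty)$, a $T$-semi-metric on a set $Y$ is a symmetric map $r\colon Y\times Y\to[0,\infty)$ with $r(x,y)=0$ iff $x=y$ and $r(x,y)\in T$ for $x\ne y$; it is strongly rigid if $r(x,y)=r(u,v)\neq0$ implies $\{x,y\}=\{u,v\}$. For dense $S\subseteq[0,\infty)$, an $S$-gauge system on $\Omega$ is a sequence $(r_i)_{i\ge0}$ with each $r_i$ a strongly rigid $(S\cap(i,i+1))$-semi-metric on $\Omega$. Put $J(m,t)=[m,t)\cap\mathbb{Q}$, $\Lambda^k_m[r](a,b)=\langle\lambda^k,J(m,r(a,b))\rangle$ for $a,b\in\Omega$, and for $x=(x_i),y=(y_i)\in N(\Omega)$, $\Lambda^k[R](x,y)=\sum_{m\ge0}\Lambda^k_m[r_m](x_m,y_m)=\langle\lambda^k,\bigsqcup_{m\ge0}J(m,r_m(x_m,y_m))\rangle$. For each $n\in\mathbb{Z}_{\ge0}$ fix an injective map $f_n\colon\Omega^{n+1}\to\Omega$, and define $\Phi\colon N(\Omega)\to N(\Omega)$ by $\Phi(x)_{2n}=x_n$, $\Phi(x)_{2n+1}=f_n(x_0,\dots,x_n)$. Finally $\tilde\Lambda^k[R](x,y)=\Lambda^k[R](\Phi(x),\Phi(y))$. *)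

theory Defs
  imports "HOL-Analysis.Analysis" "HOL-Library.Equipollence"
begin

definition mu :: "(nat \<Rightarrow> rat) \<Rightarrow> nat \<Rightarrow> nat" where
  "mu Q m = (LEAST i. of_nat m \<le> Q i \<and> Q i < of_nat m + 1)"

definition enum_ok :: "(nat \<Rightarrow> rat) \<Rightarrow> bool" where
  "enum_ok Q \<longleftrightarrow> bij_betw Q UNIV {q. q \<ge> 0} \<and>
     (\<forall>m. Q (mu Q m) = of_nat m \<and> mu Q m < mu Q (Suc m))"

definition pairing :: "(nat \<Rightarrow> rat) \<Rightarrow> (nat \<Rightarrow> real) \<Rightarrow> rat set \<Rightarrow> real" where
  "pairing Q a B = (\<Sum>i. if Q i \<in> B then a i else 0)"

definition lam :: "nat \<Rightarrow> nat \<Rightarrow> real" where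
  "lam k i = 1 / 2 ^ (2 ^ i + k)"

definition J :: "nat \<Rightarrow> real \<Rightarrow> rat set" where
  "J m t = {q. of_nat m \<le> q \<and> real_of_rat q < t}"

definition ubiq_dense :: "real set \<Rightarrow> bool" where
  "ubiq_dense S \<longleftrightarrow> S \<subseteq> {0..} \<and>
     (\<forall>U. openin (top_of_set {0..}) U \<and> U \<noteq> {} \<longrightarrow> (U \<inter> S) \<approx> S)"

definition semi_metric_on :: "real set \<Rightarrow> ('w \<Rightarrow> 'w \<Rightarrow> real) \<Rightarrow> bool" where
  "semi_metric_on T r \<longleftrightarrow> (\<forall>x y. r x y = r y x \<and> r x y \<ge> 0 \<and> (r x y = 0 \<longleftrightarrow> x = y)
       \<and> (x \<noteq> y \<longrightarrow> r x y \<in> T))"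

definition strongly_rigid :: "('w \<Rightarrow> 'w \<Rightarrow> real) \<Rightarrow> bool" where
  "strongly_rigid r \<longleftrightarrow> (\<forall>x y u v. r x y = r u v \<and> r x y \<noteq> 0 \<longrightarrow> {x, y} = {u, v})"

definition gauge_system :: "real set \<Rightarrow> (nat \<Rightarrow> 'w \<Rightarrow> 'w \<Rightarrow> real) \<Rightarrow> bool" where
  "gauge_system S R \<longleftrightarrow> S \<subseteq> {0..} \<and> {0..} \<subseteq> closure S \<and>
     (\<forall>i. semi_metric_on (S \<inter> {real i<..<real i + 1}) (R i) \<and> strongly_rigid (R i))"

definition LamM :: "(nat \<Rightarrow> rat) \<Rightarrow> nat \<Rightarrow> nat \<Rightarrow> ('w \<Rightarrow> 'w \<Rightarrow> real) \<Rightarrow> 'w \<Rightarrow> 'w \<Rightarrow> real" where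
  "LamM Q k m r a b = pairing Q (lam k) (J m (r a b))"

definition Lam :: "(nat \<Rightarrow> rat) \<Rightarrow> nat \<Rightarrow> (nat \<Rightarrow> 'w \<Rightarrow> 'w \<Rightarrow> real) \<Rightarrow> (nat \<Rightarrow> 'w) \<Rightarrow> (nat \<Rightarrow> 'w) \<Rightarrow> real" where
  "Lam Q k R x y = (\<Sum>m. LamM Q k m (R m) (x m) (y m))"

(* Phi, with f n : Omega^(n+1) -> Omega given on lists of length n+1 *)
definition Phi :: "(nat \<Rightarrow> 'w list \<Rightarrow> 'w) \<Rightarrow> (nat \<Rightarrow> 'w) \<Rightarrow> nat \<Rightarrow> 'w" where
  "Phi f x j = (if even j then x (j div 2) else f (j div 2) (map x [0..<j div 2 + 1]))"

definition LamT :: "(nat \<Rightarrow> rat) \<Rightarrow> (nat \<Rightarrow> 'w list \<Rightarrow> 'w) \<Rightarrow> nat \<Rightarrow> (nat \<Rightarrow> 'w \<Rightarrow> 'w \<Rightarrow> real) \<Rightarrow> (nat \<Rightarrow> 'w) \<Rightarrow> (nat \<Rightarrow> 'w) \<Rightarrow> real" where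
  "LamT Q f k R x y = Lam Q k R (Phi f x) (Phi f y)"

definition Q_lin_indep :: "real set \<Rightarrow> bool" where
  "Q_lin_indep A \<longleftrightarrow> (\<forall>B c. finite B \<and> B \<subseteq> A \<and> (\<Sum>b\<in>B. real_of_rat (c b) * b) = 0
       \<longrightarrow> (\<forall>b\<in>B. c b = 0))"

end

theory Submission
  imports Defs
begin


lemma pow_ge: "(2::nat)^n + j \<le> 2^(j+n)"
proof (induction j)
  case 0 then show ?case by simp
next
  case (Suc j)
  have "(1::nat) \<le> 2^(j+n)" by simp
  then have "Suc (2 ^ n + j) \<le> 2 * 2 ^ (j + n)" using Suc by linarith
  then show ?case using Suc by simp
qed

lemma lacunary:
  fixes z :: "nat \<Rightarrow> int" and M :: real and N :: int
  assumes bnd: "\<And>i. \<bar>real_of_int (z i)\<bar> \<le> M"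
    and sm: "(\<lambda>i. real_of_int (z i) / 2^(2^i)) sums (real_of_int N)"
  shows "\<exists>n0. \<forall>i\<ge>n0. z i = 0"
proof -
  define s where "s i = real_of_int (z i) / 2^(2^i)" for i
  have M0: "M \<ge> 0" using bnd[of 0] by simp
  have tail: "\<bar>real_of_int N - (\<Sum>i<n+1. s i)\<bar> \<le> 2 * M / 2^(2^(n+1))" for n
  proof -
    have ss: "s sums N" using sm by (simp add: s_def[abs_def])
    have t: "(\<lambda>j. s (j + (n+1))) sums (N - (\<Sum>i<n+1. s i))"
      using sums_iff_shift[of s "n+1" "N - (\<Sum>i<n+1. s i)"] ss by simp
    have geo: "(\<lambda>j. M / 2^(2^(n+1)) * (1/2)^j) sums (M / 2^(2^(n+1)) * 2)"
      using geometric_sums[of "1/2::real"] by (intro sums_mult) simp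
    have le: "\<bar>s (j + (n+1))\<bar> \<le> M / 2^(2^(n+1)) * (1/2)^j" for j
    proof -
      have "(2::real)^(2^(n+1)+j) \<le> 2^(2^(j+(n+1)))"
        by (intro power_increasing) (use pow_ge[of "n+1" j] in auto)
      hence "\<bar>s (j + (n+1))\<bar> = \<bar>real_of_int (z (j+(n+1)))\<bar> / 2^(2^(j+(n+1)))" by (simp add: s_def)
      also have "\<dots> \<le> M / 2^(2^(j+(n+1)))" by (intro divide_right_mono bnd) simp
      also have "\<dots> \<le> M / 2^(2^(n+1)+j)" using M0 \<open>(2::real)^(2^(n+1)+j) \<le> _\<close>
        by (intro divide_left_mono) simp_all
      also have "\<dots> = M / 2^(2^(n+1)) * (1/2)^j" by (simp add: power_add power_one_over)
      finally show ?thesis .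
    qed
    have a: "(\<lambda>j. \<bar>s (j + (n+1))\<bar>) sums (suminf (\<lambda>j. \<bar>s (j + (n+1))\<bar>))"
      by (rule summable_sums, rule summable_comparison_test[OF _ sums_summable[OF geo]]) (use le in auto)
    have "\<bar>N - (\<Sum>i<n+1. s i)\<bar> \<le> suminf (\<lambda>j. \<bar>s (j + (n+1))\<bar>)"
      using t a summable_rabs[OF sums_summable[OF a]] sums_unique[OF t] by simp
    also have "\<dots> \<le> M / 2^(2^(n+1)) * 2"
      using le by (intro sums_le[OF _ a geo]) auto
    finally show ?thesis by (simp add: mult.commute)
  qed
  obtain n1 :: nat where n1: "2 * M < n1" using reals_Archimedean2 by blast
  have eqN: "(\<Sum>i<n+1. s i) = N" if "n \<ge> n1" for n
  proof -
    define T where "T = 2^(2^n) * N - (\<Sum>i<n+1. z i * 2^(2^n - 2^i))"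
    have pw: "(2::real)^(2^n) / 2^(2^i) = 2^(2^n - 2^i)" if "i < n+1" for i
    proof -
      have "2^i \<le> (2::nat)^n" using that by (intro power_increasing) auto
      thus ?thesis by (simp add: power_diff)
    qed
    have e1: "(\<Sum>i<n+1. real_of_int (z i * 2^(2^n - 2^i))) = (\<Sum>i<n+1. (2::real)^(2^n) * s i)"
    proof (rule sum.cong)
      fix i assume "i \<in> {..<n+1}"
      hence "i < n+1" by simp
      have "2^(2^n) * s i = real_of_int (z i) * ((2::real)^(2^n)/2^(2^i))"
        by (simp add: s_def)
      also have "\<dots> = real_of_int (z i * 2^(2^n - 2^i))" using pw[OF \<open>i < n+1\<close>] by simp
      finally show "real_of_int (z i * 2^(2^n - 2^i)) = 2^(2^n) * s i" by simp
    qed simp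
    have "real_of_int T = real_of_int (2^(2^n) * N) - (\<Sum>i<n+1. real_of_int (z i * 2^(2^n - 2^i)))"
      unfolding T_def of_int_diff of_int_sum by (rule refl)
    also have "\<dots> = (2::real)^(2^n) * real_of_int N - (\<Sum>i<n+1. (2::real)^(2^n) * s i)"
      unfolding e1 by (simp only: of_int_mult of_int_power of_int_numeral)
    also have "\<dots> = 2^(2^n) * (N - (\<Sum>i<n+1. s i))"
      by (simp only: sum_distrib_left right_diff_distrib)
    finally have Teq: "real_of_int T = 2^(2^n) * (N - (\<Sum>i<n+1. s i))" .
    hence "\<bar>real_of_int T\<bar> = 2^(2^n) * \<bar>N - (\<Sum>i<n+1. s i)\<bar>" by (simp add: abs_mult)
    also have "\<dots> \<le> 2^(2^n) * (2 * M / 2^(2^(n+1)))"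
      by (intro mult_left_mono tail) auto
    also have "\<dots> = 2 * M / 2^(2^n)"
      by (simp add: power_add power_mult_distrib field_simps power2_eq_square[symmetric] power_mult[symmetric])
    also have "\<dots> < 1"
    proof -
      have "real n < 2^n" by (metis of_nat_less_numeral_power_cancel_iff less_exp)  
      have "(2::real)^n \<le> 2^(2^n)" by (intro power_increasing) (auto intro: less_imp_le less_exp)
      have "2*M < 2^(2^n)" using n1 that \<open>real n < 2^n\<close> \<open>(2::real)^n \<le> _\<close> by linarith
      thus ?thesis by simp
    qed
    finally have "T = 0" by linarith
    thus ?thesis using Teq by simp
  qed
  have "z i = 0" if "i \<ge> n1 + 1" for i
  proof -
    define n where "n = i - 1"
    have n: "i = n + 1" "n \<ge> n1" using that unfolding n_def by linarith+
    have "(\<Sum>i<(n+1)+1. s i) = N" using eqN[of "n+1"] n by simp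
    moreover have "(\<Sum>i<n+1. s i) = N" using eqN n by simp
    ultimately have "s (n+1) = 0" by simp
    thus ?thesis using n by (simp add: s_def)
  qed
  thus ?thesis by blast
qed


lemma phi_odd: "Phi f x (2*n+1) = f n (map x [0..<n+1])"
  by (simp add: Phi_def)

lemma pre_ne: assumes "x j \<noteq> y j" "j \<le> n" shows "map x [0..<n+1] \<noteq> map y [0..<n+1]"
proof
  assume "map x [0..<n+1] = map y [0..<n+1]"
  hence "map x [0..<n+1] ! j = map y [0..<n+1] ! j" by (rule arg_cong[where f="\<lambda>l. l ! j"])
  moreover have "j < length [0..<n+1]" using assms by simp
  ultimately show False using assms by (simp only: nth_map length_upt nth_upt) simp
qed

lemma LamT_sym:
  assumes "\<And>m u v. R' m u v = R' m v u"
  shows "LamT Q f k R' x y = LamT Q f k R' y x"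
proof -
  have "(\<lambda>m. LamM Q k m (R' m) (Phi f x m) (Phi f y m)) = (\<lambda>m. LamM Q k m (R' m) (Phi f y m) (Phi f x m))"
    by (rule ext, unfold LamM_def, subst assms, rule refl)
  thus ?thesis by (simp add: LamT_def Lam_def)
qed

definition fl :: "rat \<Rightarrow> nat" where "fl q = nat \<lfloor>q\<rfloor>"

lemma memchar:
  assumes "real m < real_of_rat q" "real_of_rat q < real m + 1"
  shows "fl q = m \<and> (q \<in> J m t \<longleftrightarrow> real_of_rat q < t)"
proof -
  have a: "of_nat m < q" using assms(1) by (metis of_rat_less of_rat_of_nat_eq)
  have "real_of_rat q < real_of_rat (of_nat m + 1)" using assms(2) by (simp add: of_rat_add)
  hence b: "q < of_nat m + 1" by (simp only: of_rat_less)
  have "\<lfloor>q\<rfloor> = int m" using a b by (intro floor_unique) auto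
  hence "fl q = m" by (simp add: fl_def)
  thus ?thesis using a by (auto simp: J_def)
qed




lemma lam_le: "lam k i \<le> (1/2)^i"
proof -
  have "(2::real)^i \<le> 2^(2^i+k)"
    by (intro power_increasing) (auto intro: less_imp_le less_exp trans_le_add1)
  thus ?thesis unfolding lam_def by (simp add: power_one_over divide_simps)
qed

lemma lam_pos: "lam k i > 0" by (simp add: lam_def)

lemma lam_summable: "summable (lam k)"
proof (rule summable_comparison_test[OF _ summable_geometric[of "1/2"]])
  show "\<exists>N. \<forall>n\<ge>N. norm (lam k n) \<le> (1/2)^n" using lam_le lam_pos by (simp add: abs_of_pos)
qed simp

lemma memJ:
  assumes r: "\<And>m. r m = 0 \<or> (real m < r m \<and> r m < real m + 1)"
  shows "q \<in> J m (r m) \<longleftrightarrow> (m = fl q \<and> q \<in> J (fl q) (r (fl q)))"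
proof
  assume "m = fl q \<and> q \<in> J (fl q) (r (fl q))" thus "q \<in> J m (r m)" by simp
next
  assume q: "q \<in> J m (r m)"
  hence q1: "of_nat m \<le> q" and q2: "real_of_rat q < r m" by (auto simp: J_def)
  have "real m \<le> real_of_rat q" using q1 by (metis of_rat_less_eq of_rat_of_nat_eq)
  hence "r m \<noteq> 0" using q2 by auto
  hence "r m < real m + 1" using r by auto
  moreover have "real_of_rat (of_nat m + 1) = real m + 1" by (simp add: of_rat_add)
  ultimately have "real_of_rat q < real_of_rat (of_nat m + 1)" using q2 by simp
  hence "q < of_nat m + 1" by (simp only: of_rat_less)
  hence "\<lfloor>q\<rfloor> = int m" using q1 by (intro floor_unique) auto
  hence "fl q = m" by (simp add: fl_def)
  thus "m = fl q \<and> q \<in> J (fl q) (r (fl q))" using q by simp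
qed

lemma rep:
  assumes r: "\<And>m. r m = 0 \<or> (real m < r m \<and> r m < real m + 1)"
  shows "(\<lambda>i. if Q i \<in> J (fl (Q i)) (r (fl (Q i))) then lam k i else 0)
           sums (\<Sum>m. pairing Q (lam k) (J m (r m)))"
proof -
  define g where "g i = (if Q i \<in> J (fl (Q i)) (r (fl (Q i))) then lam k i else 0)" for i
  define H where "H = (\<lambda>(m,i). if Q i \<in> J m (r m) then lam k i else 0)"
  have gs: "summable g"
    by (rule summable_comparison_test[OF _ lam_summable[of k]]) (auto simp: g_def lam_pos less_imp_le)
  define V where "V = suminf g"
  have g_has: "(g has_sum V) UNIV"
    using sums_nonneg_imp_has_sum[OF summable_sums[OF gs]] by (auto simp: V_def g_def lam_pos less_imp_le)
  define \<phi> where "\<phi> i = (fl (Q i), i)" for i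
  have inj: "inj \<phi>" by (auto simp: \<phi>_def inj_def)
  have "((H \<circ> \<phi>) has_sum V) UNIV"
    using g_has by (simp add: H_def \<phi>_def g_def[abs_def] o_def)
  hence "(H has_sum V) (range \<phi>)" using has_sum_reindex[OF inj] by blast
  hence HS: "(H has_sum V) (Sigma UNIV (\<lambda>_. UNIV))"
  proof (subst (asm) has_sum_cong_neutral[where T = "Sigma UNIV (\<lambda>_. UNIV)" and g = H])
    show "H x = 0" if "x \<in> Sigma UNIV (\<lambda>_. UNIV) - range \<phi>" for x
    proof -
      obtain m i where x: "x = (m,i)" by (cases x)
      have "m \<noteq> fl (Q i)" using that x by (auto simp: \<phi>_def)
      thus ?thesis using memJ[OF r, of "Q i" m] by (simp add: H_def x)
    qed
  qed auto
  have Hm: "((\<lambda>i. H (m, i)) has_sum pairing Q (lam k) (J m (r m))) UNIV" for m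
  proof -
    have sm: "summable (\<lambda>i. H (m, i))"
      by (rule summable_comparison_test[OF _ lam_summable[of k]]) (auto simp: H_def lam_pos less_imp_le)
    have "(\<lambda>i. H (m, i)) sums pairing Q (lam k) (J m (r m))"
      using summable_sums[OF sm] by (simp add: pairing_def H_def)
    thus ?thesis by (rule sums_nonneg_imp_has_sum) (auto simp: H_def lam_pos less_imp_le)
  qed
  have "((\<lambda>m. pairing Q (lam k) (J m (r m))) has_sum V) UNIV"
    by (rule has_sum_SigmaD[OF HS]) (use Hm in auto)
  hence "(\<lambda>m. pairing Q (lam k) (J m (r m))) sums V" by (rule has_sum_imp_sums)
  hence eq: "(\<Sum>m. pairing Q (lam k) (J m (r m))) = V" by (rule sums_unique[symmetric])
  show ?thesis unfolding eq V_def using summable_sums[OF gs] unfolding g_def[abs_def] .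
qed



lemma pick_rat:
  assumes "bij_betw Q UNIV {q::rat. q \<ge> 0}" "a < b" "(0::real) \<le> a"
  obtains i where "a < real_of_rat (Q i)" "real_of_rat (Q i) < b"
proof -
  obtain r where "r \<in> \<rat>" "a < r" "r < b" using Rats_dense_in_real[OF assms(2)] by blast
  then obtain q where q: "r = real_of_rat q" by (auto elim: Rats_cases)
  have "q \<ge> 0" using q \<open>a < r\<close> assms(3)
    by (metis less_le_trans linorder_not_le of_rat_less_0_iff order_less_imp_le)
  hence "q \<in> range Q" using bij_betw_imp_surj_on[OF assms(1)] by auto
  then obtain i where "Q i = q" by auto
  thus ?thesis using that q \<open>a < r\<close> \<open>r < b\<close> by auto
qed

lemma separate:
  fixes T :: "real set" and Q :: "nat \<Rightarrow> rat"
  assumes fin: "finite T" and t0: "real m < t0" "t0 < real m + 1" "t0 \<notin> T"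
    and bij: "bij_betw Q UNIV {q. q \<ge> 0}"
  shows "\<exists>i1 i2. n0 \<le> i1 \<and> n0 \<le> i2 \<and> real m < real_of_rat (Q i1) \<and> real_of_rat (Q i1) < t0
     \<and> t0 < real_of_rat (Q i2) \<and> real_of_rat (Q i2) < real m + 1
     \<and> (\<forall>t\<in>T. real_of_rat (Q i1) < t \<longleftrightarrow> real_of_rat (Q i2) < t)"
proof -
  define F where "F = T \<union> (\<lambda>j. real_of_rat (Q j)) ` {..<n0} \<union> {real m, real m + 1}"
  have finF: "finite F" using fin by (simp add: F_def)
  define L where "L = {x\<in>F. x < t0}"
  define U where "U = {x\<in>F. t0 < x}"
  have fL: "finite L" "real m \<in> L" using finF t0 by (auto simp: L_def F_def)
  have fU: "finite U" "real m + 1 \<in> U" using finF t0 by (auto simp: U_def F_def)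
  define lo where "lo = Max L"
  define hi where "hi = Min U"
  have lo: "lo < t0" using Max_in[OF fL(1)] fL(2) by (auto simp: lo_def L_def)
  have hi: "t0 < hi" using Min_in[OF fU(1)] fU(2) by (auto simp: hi_def U_def)
  have mlo: "real m \<le> lo" using Max_ge[OF fL] by (simp add: lo_def)
  have mhi: "hi \<le> real m + 1" using Min_le[OF fU] by (simp add: hi_def)
  have geL: "x \<le> lo" if "x \<in> F" "x < t0" for x using Max_ge[OF fL(1), of x] that by (simp add: lo_def L_def)
  have leU: "hi \<le> x" if "x \<in> F" "t0 < x" for x using Min_le[OF fU(1), of x] that by (simp add: hi_def U_def)
  obtain i1 where i1: "lo < real_of_rat (Q i1)" "real_of_rat (Q i1) < t0"
    using pick_rat[OF bij lo] mlo by auto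
  obtain i2 where i2: "t0 < real_of_rat (Q i2)" "real_of_rat (Q i2) < hi"
    using pick_rat[OF bij hi] mlo lo by auto
  have n1: "n0 \<le> i1"
  proof (rule ccontr)
    assume "\<not> n0 \<le> i1"
    hence "real_of_rat (Q i1) \<in> F" by (auto simp: F_def)
    thus False using geL i1 by fastforce
  qed
  have n2: "n0 \<le> i2"
  proof (rule ccontr)
    assume "\<not> n0 \<le> i2"
    hence "real_of_rat (Q i2) \<in> F" by (auto simp: F_def)
    thus False using leU i2 by fastforce
  qed
  have "\<forall>t\<in>T. real_of_rat (Q i1) < t \<longleftrightarrow> real_of_rat (Q i2) < t"
  proof
    fix t assume "t \<in> T"
    hence tF: "t \<in> F" by (simp add: F_def)
    have "t \<noteq> t0" using \<open>t \<in> T\<close> t0 by auto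
    hence "t < t0 \<or> t0 < t" by linarith
    thus "real_of_rat (Q i1) < t \<longleftrightarrow> real_of_rat (Q i2) < t"
    proof
      assume "t < t0" thus ?thesis using geL[OF tF] i1 i2 by linarith
    next
      assume "t0 < t" thus ?thesis using leU[OF tF] i1 i2 by linarith
    qed
  qed
  thus ?thesis using n1 n2 i1 i2 mlo mhi lo hi by (intro exI[of _ i1] exI[of _ i2]) auto
qed

lemma common_denom:
  fixes c :: "'a \<Rightarrow> rat"
  assumes "finite B"
  shows "\<exists>d::int. d > 0 \<and> (\<forall>b\<in>B. \<exists>w::int. of_int d * c b = of_int w)"
  using assms
proof (induction B rule: finite_induct)
  case empty then show ?case by (intro exI[of _ 1]) simp
next
  case (insert x F)
  then obtain d where d: "d > 0" "\<forall>b\<in>F. \<exists>w::int. of_int d * c b = of_int w" by blast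
  obtain p q where pq: "quotient_of (c x) = (p, q)" by (cases "quotient_of (c x)")
  have q: "q > 0" using quotient_of_denom_pos[OF pq] .
  have cx: "c x = of_int p / of_int q" using quotient_of_div[OF pq] .
  show ?case
  proof (rule exI[of _ "d*q"], intro conjI ballI)
    show "d * q > 0" using d q by simp
    fix b assume "b \<in> insert x F"
    then consider "b = x" | "b \<in> F" by auto
    then show "\<exists>w::int. of_int (d*q) * c b = of_int w"
    proof cases
      case 1 then show ?thesis using q cx by (intro exI[of _ "d*p"]) simp
    next
      case 2 then obtain w where "of_int d * c b = of_int w" using d by blast
      then show ?thesis by (intro exI[of _ "q*w"]) (simp add: algebra_simps)
      qed
  qed
qed

theorem corollary4p25:
  fixes Q :: "nat \<Rightarrow> rat"
    and f :: "nat \<Rightarrow> 'w list \<Rightarrow> 'w"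
    and K :: "'i \<Rightarrow> real set"
    and R :: "'i \<Rightarrow> nat \<Rightarrow> 'w \<Rightarrow> 'w \<Rightarrow> real"
    and k :: nat
  assumes Q: "enum_ok Q"
    and Omega: "(UNIV :: 'w set) \<approx> (UNIV :: real set)"
    and f_inj: "\<And>n. inj_on (f n) {xs. length xs = Suc n}"
    and index: "(UNIV :: 'i set) \<approx> (UNIV :: real option set)"
    and disj: "\<And>a b. a \<noteq> b \<Longrightarrow> disjnt (K a) (K b)"
    and ud: "\<And>a. ubiq_dense (K a)"
    and card: "\<And>a. K a \<approx> (UNIV :: real set)"
    and gauge: "\<And>a. gauge_system (K a) (R a)"
  shows "Q_lin_indep ({1} \<union> (\<Union>a. {LamT Q f k (R a) x y | x y. x \<noteq> y}))"
proof -
  have bijQ: "bij_betw Q UNIV {q. q \<ge> 0}" using Q by (simp add: enum_ok_def)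
  have symR: "R a i u v = R a i v u" for a i u v
    using gauge[of a] by (simp add: gauge_system_def semi_metric_on_def)
  have zeroR: "R a i u v = 0 \<longleftrightarrow> u = v" for a i u v
    using gauge[of a] by (simp add: gauge_system_def semi_metric_on_def)
  have rangeR: "u \<noteq> v \<Longrightarrow> R a i u v \<in> K a \<and> real i < R a i u v \<and> R a i u v < real i + 1" for a i u v
    using gauge[of a] unfolding gauge_system_def semi_metric_on_def by auto
  have rigR: "R a i u v = R a i u' v' \<Longrightarrow> R a i u v \<noteq> 0 \<Longrightarrow> {u, v} = {u', v'}" for a i u v u' v'
    using gauge[of a] unfolding gauge_system_def strongly_rigid_def by blast
  show ?thesis unfolding Q_lin_indep_def
  proof (intro allI impI)
    fix B c
    assume H: "finite B \<and> B \<subseteq> {1} \<union> (\<Union>a. {LamT Q f k (R a) x y |x y. x \<noteq> y}) \<and> (\<Sum>b\<in>B. real_of_rat (c b) * b) = 0"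
    hence finB: "finite B" and subB: "B \<subseteq> {1} \<union> (\<Union>a. {LamT Q f k (R a) x y |x y. x \<noteq> y})"
      and sum0: "(\<Sum>b\<in>B. real_of_rat (c b) * b) = 0" by auto
    define B' where "B' = B - {1}"
    have finB': "finite B'" using finB by (simp add: B'_def)
    have n1B': "1 \<notin> B'" by (simp add: B'_def)
    have wit: "\<forall>b\<in>B'. \<exists>a x y. x \<noteq> y \<and> b = LamT Q f k (R a) x y"
      using subB by (auto simp: B'_def)
    obtain A where A: "\<forall>b\<in>B'. \<exists>x y. x \<noteq> y \<and> b = LamT Q f k (R (A b)) x y"
      using bchoice[OF wit] by blast
    obtain X where X: "\<forall>b\<in>B'. \<exists>y. X b \<noteq> y \<and> b = LamT Q f k (R (A b)) (X b) y"
      using bchoice[OF A] by blast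
    obtain Y where XY: "\<forall>b\<in>B'. X b \<noteq> Y b \<and> b = LamT Q f k (R (A b)) (X b) (Y b)"
      using bchoice[OF X] by blast
    define rr where "rr b m = R (A b) m (Phi f (X b) m) (Phi f (Y b) m)" for b m
    have rr_range: "rr b m = 0 \<or> (real m < rr b m \<and> rr b m < real m + 1)" for b m
      using rangeR[of "Phi f (X b) m" "Phi f (Y b) m" "A b" m] zeroR[of "A b" m "Phi f (X b) m" "Phi f (Y b) m"]
      unfolding rr_def by blast
    define mem where "mem b i \<longleftrightarrow> Q i \<in> J (fl (Q i)) (rr b (fl (Q i)))" for b i
    have repb: "(\<lambda>i. if mem b i then lam k i else 0) sums b" if "b \<in> B'" for b
    proof -
      have eqb: "b = (\<Sum>m. pairing Q (lam k) (J m (rr b m)))"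
        using XY that by (simp add: LamT_def Lam_def LamM_def rr_def)
      have r: "(\<lambda>i. if mem b i then lam k i else 0) sums (\<Sum>m. pairing Q (lam k) (J m (rr b m)))"
        unfolding mem_def[abs_def] by (rule rep[OF rr_range[of b]])
      show ?thesis using r unfolding eqb[symmetric] .
    qed
    obtain d where d: "d > 0" "\<forall>b\<in>B. \<exists>w::int. of_int d * c b = of_int w"
      using common_denom[OF finB] by blast
    obtain W where W: "\<forall>b\<in>B. of_int d * c b = of_int (W b)"
      using bchoice[OF d(2)] by blast
    define C where "C = (if 1 \<in> B then c 1 else 0)"
    define WC where "WC = (if 1 \<in> B then W 1 else 0)"
    have WC: "of_int d * C = of_int WC" using W by (simp add: C_def WC_def)
    have sumB: "(\<Sum>b\<in>B'. real_of_rat (c b) * b) + real_of_rat C = 0"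
    proof (cases "1 \<in> B")
      case True
      hence "B = insert 1 B'" by (auto simp: B'_def)
      hence "(\<Sum>b\<in>B. real_of_rat (c b) * b) = real_of_rat (c 1) * 1 + (\<Sum>b\<in>B'. real_of_rat (c b) * b)"
        using finB' n1B' by simp
      thus ?thesis using sum0 True by (simp add: C_def)
    next
      case False
      hence "B = B'" by (auto simp: B'_def)
      thus ?thesis using sum0 False by (simp add: C_def)
    qed
    define z where "z i = (\<Sum>b\<in>B'. W b * (if mem b i then 1 else 0))" for i
    define N where "N = - WC * 2^k"
    have zs: "(\<lambda>i. real_of_int (z i) / 2^(2^i)) sums real_of_int N"
    proof -
      have s1: "(\<lambda>i. \<Sum>b\<in>B'. real_of_rat (c b) * (if mem b i then lam k i else 0)) sums (\<Sum>b\<in>B'. real_of_rat (c b) * b)"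
        by (rule sums_sum, rule sums_mult, erule repb)
      have e: "(\<Sum>b\<in>B'. real_of_rat (c b) * b) = - real_of_rat C" using sumB by linarith
      have s2: "(\<lambda>i. real_of_int d * 2^k * (\<Sum>b\<in>B'. real_of_rat (c b) * (if mem b i then lam k i else 0))) sums (real_of_int d * 2^k * (- real_of_rat C))"
        by (rule sums_mult) (use s1 e in simp)
      have tm: "real_of_int d * 2^k * (\<Sum>b\<in>B'. real_of_rat (c b) * (if mem b i then lam k i else 0)) = real_of_int (z i) / 2^(2^i)" for i
      proof -
        have "real_of_int d * 2^k * (\<Sum>b\<in>B'. real_of_rat (c b) * (if mem b i then lam k i else 0)) = (\<Sum>b\<in>B'. real_of_int d * 2^k * (real_of_rat (c b) * (if mem b i then lam k i else 0)))"
          by (rule sum_distrib_left)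
        also have "\<dots> = (\<Sum>b\<in>B'. real_of_int (W b * (if mem b i then 1 else 0)) / 2^(2^i))"
        proof (rule sum.cong[OF refl])
          fix b assume "b \<in> B'"
          hence "b \<in> B" by (simp add: B'_def)
          hence wb: "real_of_int (W b) = real_of_int d * real_of_rat (c b)"
            using W by (metis of_rat_mult of_rat_of_int_eq)
          show "real_of_int d * 2^k * (real_of_rat (c b) * (if mem b i then lam k i else 0)) = real_of_int (W b * (if mem b i then 1 else 0)) / 2^(2^i)"
            by (cases "mem b i") (simp_all add: wb lam_def power_add field_simps)
        qed
        also have "\<dots> = real_of_int (z i) / 2^(2^i)"
          by (simp add: z_def sum_divide_distrib)
        finally show ?thesis .
      qed
      have wc: "real_of_int WC = real_of_int d * real_of_rat C" using WC by (metis of_rat_mult of_rat_of_int_eq)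
      have ne: "real_of_int d * 2^k * (- real_of_rat C) = real_of_int N" by (simp add: N_def wc)
      show ?thesis using s2 unfolding tm ne .
    qed
    have zb: "\<bar>real_of_int (z i)\<bar> \<le> real_of_int (\<Sum>b\<in>B'. \<bar>W b\<bar>)" for i
    proof -
      have "\<bar>z i\<bar> \<le> (\<Sum>b\<in>B'. \<bar>W b * (if mem b i then 1 else 0)\<bar>)" unfolding z_def by (rule sum_abs)
      also have "\<dots> \<le> (\<Sum>b\<in>B'. \<bar>W b\<bar>)" by (rule sum_mono) (simp add: abs_mult)
      finally have "\<bar>z i\<bar> \<le> (\<Sum>b\<in>B'. \<bar>W b\<bar>)" .
      thus ?thesis by (metis of_int_abs of_int_le_iff)
    qed
    obtain n0 where n0: "\<forall>i\<ge>n0. z i = 0" using lacunary[OF zb zs] by blast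
    have cz: "c b0 = 0" if b0: "b0 \<in> B'" for b0
    proof -
      have ev: "eventually (\<lambda>n. rr b0 (2*n+1) \<noteq> 0 \<and> (\<forall>b\<in>B'-{b0}. rr b (2*n+1) \<noteq> rr b0 (2*n+1))) sequentially"
      proof -
        have xy0: "X b0 \<noteq> Y b0" using XY b0 by blast
        then obtain j0 where j0: "X b0 j0 \<noteq> Y b0 j0" by (meson ext)
        have nz: "rr b0 (2*n+1) \<noteq> 0" if "n \<ge> j0" for n
        proof -
          have "map (X b0) [0..<n+1] \<noteq> map (Y b0) [0..<n+1]" by (rule pre_ne[of "X b0" j0 "Y b0" n, OF j0 that])
          moreover have L: "map x [0..<n+1] \<in> {xs. length xs = Suc n}" for x :: "nat \<Rightarrow> 'w" by simp
          ultimately have "f n (map (X b0) [0..<n+1]) \<noteq> f n (map (Y b0) [0..<n+1])"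
            using inj_onD[OF f_inj[of n] _ L[of "X b0"] L[of "Y b0"]] by blast
          thus ?thesis unfolding rr_def zeroR phi_odd .
        qed
        have "\<forall>b\<in>B'-{b0}. eventually (\<lambda>n. rr b (2*n+1) \<noteq> rr b0 (2*n+1)) sequentially"
        proof
          fix b assume bB: "b \<in> B' - {b0}"
          show "eventually (\<lambda>n. rr b (2*n+1) \<noteq> rr b0 (2*n+1)) sequentially"
          proof (cases "A b = A b0")
            case False
            have "rr b (2*n+1) \<noteq> rr b0 (2*n+1)" if "n \<ge> j0" for n
            proof
              assume eq: "rr b (2*n+1) = rr b0 (2*n+1)"
              have ne0: "Phi f (X b0) (2*n+1) \<noteq> Phi f (Y b0) (2*n+1)"
                using nz[OF that] zeroR unfolding rr_def by blast
              have ne1: "Phi f (X b) (2*n+1) \<noteq> Phi f (Y b) (2*n+1)"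
                using nz[OF that] eq zeroR unfolding rr_def by metis
              have "rr b0 (2*n+1) \<in> K (A b0)"
                using rangeR[where a="A b0" and i="2*n+1", OF ne0] unfolding rr_def by blast
              moreover have "rr b (2*n+1) \<in> K (A b)"
                using rangeR[where a="A b" and i="2*n+1", OF ne1] unfolding rr_def by blast
              ultimately show False using disj[OF False] eq by (auto simp: disjnt_def)
            qed
            thus ?thesis unfolding eventually_sequentially by blast
          next
            case True
            have "{X b, Y b} \<noteq> {X b0, Y b0}"
            proof
              assume dbl: "{X b, Y b} = {X b0, Y b0}"
              have eb: "b = LamT Q f k (R (A b)) (X b) (Y b)" using XY bB by auto
              have eb0: "b0 = LamT Q f k (R (A b)) (X b0) (Y b0)" using XY b0 True by auto
              from dbl consider "X b = X b0 \<and> Y b = Y b0" | "X b = Y b0 \<and> Y b = X b0"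
                by (auto simp: doubleton_eq_iff)
              then have "b = b0"
              proof cases
                case 1 then show ?thesis using eb eb0 by simp
              next
                case 2 then show ?thesis using eb eb0 LamT_sym[where R'="R (A b)", OF symR] by metis
              qed
              thus False using bB by simp
            qed
            hence "(X b \<noteq> X b0 \<or> Y b \<noteq> Y b0) \<and> (X b \<noteq> Y b0 \<or> Y b \<noteq> X b0)" by auto
            then obtain j1 j2 where j1: "X b j1 \<noteq> X b0 j1 \<or> Y b j1 \<noteq> Y b0 j1"
                and j2: "X b j2 \<noteq> Y b0 j2 \<or> Y b j2 \<noteq> X b0 j2"
              by (metis ext)
            have "rr b (2*n+1) \<noteq> rr b0 (2*n+1)" if "n \<ge> max j0 (max j1 j2)" for n
            proof
              assume eq: "rr b (2*n+1) = rr b0 (2*n+1)"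
              have jn: "j0 \<le> n" "j1 \<le> n" "j2 \<le> n" using that by auto
              have eq': "R (A b) (2*n+1) (Phi f (X b) (2*n+1)) (Phi f (Y b) (2*n+1))
                  = R (A b) (2*n+1) (Phi f (X b0) (2*n+1)) (Phi f (Y b0) (2*n+1))"
                using eq True unfolding rr_def by simp
              have nz': "R (A b) (2*n+1) (Phi f (X b) (2*n+1)) (Phi f (Y b) (2*n+1)) \<noteq> 0"
                using eq nz[OF jn(1)] unfolding rr_def by simp
              have "{Phi f (X b) (2*n+1), Phi f (Y b) (2*n+1)} = {Phi f (X b0) (2*n+1), Phi f (Y b0) (2*n+1)}"
                by (rule rigR[OF eq' nz'])
              hence dbl: "{f n (map (X b) [0..<n+1]), f n (map (Y b) [0..<n+1])} = {f n (map (X b0) [0..<n+1]), f n (map (Y b0) [0..<n+1])}"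
                by (simp only: phi_odd)
              have injn: "inj_on (f n) {xs. length xs = Suc n}" by (rule f_inj)
              have L: "map x [0..<n+1] \<in> {xs. length xs = Suc n}" for x :: "nat \<Rightarrow> 'w" by simp
              have "{map (X b) [0..<n+1], map (Y b) [0..<n+1]} = {map (X b0) [0..<n+1], map (Y b0) [0..<n+1]}"
                using dbl inj_onD[OF injn _ L L] by (auto simp: doubleton_eq_iff)
              moreover have "map (X b) [0..<n+1] \<noteq> map (X b0) [0..<n+1] \<or> map (Y b) [0..<n+1] \<noteq> map (Y b0) [0..<n+1]"
                using j1 pre_ne[of "X b" j1 "X b0" n] pre_ne[of "Y b" j1 "Y b0" n] jn by blast
              moreover have "map (X b) [0..<n+1] \<noteq> map (Y b0) [0..<n+1] \<or> map (Y b) [0..<n+1] \<noteq> map (X b0) [0..<n+1]"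
                using j2 pre_ne[of "X b" j2 "Y b0" n] pre_ne[of "Y b" j2 "X b0" n] jn by blast
              ultimately show False by (auto simp: doubleton_eq_iff)
            qed
            thus ?thesis unfolding eventually_sequentially by blast
          qed
        qed
        hence "eventually (\<lambda>n. \<forall>b\<in>B'-{b0}. rr b (2*n+1) \<noteq> rr b0 (2*n+1)) sequentially"
          using finB' by (intro eventually_ball_finite) auto
        moreover have "eventually (\<lambda>n. rr b0 (2*n+1) \<noteq> 0) sequentially"
          unfolding eventually_sequentially using nz by blast
        ultimately show ?thesis by (simp add: eventually_conj)
      qed
      then obtain NN where NN: "\<forall>n\<ge>NN. rr b0 (2*n+1) \<noteq> 0 \<and> (\<forall>b\<in>B'-{b0}. rr b (2*n+1) \<noteq> rr b0 (2*n+1))"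
        unfolding eventually_sequentially by blast
      define m where "m = 2*NN+1"
      have m0: "rr b0 m \<noteq> 0" and mne: "\<forall>b\<in>B'-{b0}. rr b m \<noteq> rr b0 m" using NN by (auto simp: m_def)
      have t0: "real m < rr b0 m" "rr b0 m < real m + 1" using rr_range[of b0 m] m0 by auto
      have tT: "rr b0 m \<notin> (\<lambda>b. rr b m) ` (B' - {b0})" using mne by auto
      have finT: "finite ((\<lambda>b. rr b m) ` (B' - {b0}))" using finB' by simp
      obtain i1 i2 where i: "n0 \<le> i1" "n0 \<le> i2" "real m < real_of_rat (Q i1)" "real_of_rat (Q i1) < rr b0 m"
          "rr b0 m < real_of_rat (Q i2)" "real_of_rat (Q i2) < real m + 1"
          and iT: "\<forall>t\<in>(\<lambda>b. rr b m) ` (B' - {b0}). real_of_rat (Q i1) < t \<longleftrightarrow> real_of_rat (Q i2) < t"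
        using separate[OF finT t0 tT bijQ, of n0] by blast
      have h1: "real_of_rat (Q i1) < real m + 1" using i t0 by linarith
      have h2: "real m < real_of_rat (Q i2)" using i t0 by linarith
      have mem1: "mem b i1 \<longleftrightarrow> real_of_rat (Q i1) < rr b m" for b
        using memchar[OF i(3) h1, of "rr b m"] by (simp add: mem_def)
      have mem2: "mem b i2 \<longleftrightarrow> real_of_rat (Q i2) < rr b m" for b
        using memchar[OF h2 i(6), of "rr b m"] by (simp add: mem_def)
      have same: "mem b i1 \<longleftrightarrow> mem b i2" if "b \<in> B' - {b0}" for b
        using iT that mem1 mem2 by auto
      have d1: "mem b0 i1" using mem1 i by simp
      have d2: "\<not> mem b0 i2" using mem2 i by simp
      have zsplit: "z i = W b0 * (if mem b0 i then 1 else 0) + (\<Sum>b\<in>B'-{b0}. W b * (if mem b i then 1 else 0))" for i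
        unfolding z_def using finB' b0 by (simp add: sum.remove)
      have "(\<Sum>b\<in>B'-{b0}. W b * (if mem b i1 then 1 else 0)) = (\<Sum>b\<in>B'-{b0}. W b * (if mem b i2 then 1 else 0))"
        by (rule sum.cong) (simp_all add: same)
      hence "W b0 = 0" using zsplit[of i1] zsplit[of i2] n0 i(1,2) d1 d2 by simp
      hence "of_int d * c b0 = 0" using W b0 by (simp add: B'_def)
      thus ?thesis using d(1) by simp
    qed
    show "\<forall>b\<in>B. c b = 0"
    proof
      fix b assume "b \<in> B"
      show "c b = 0"
      proof (cases "b = 1")
        case False thus ?thesis using cz \<open>b \<in> B\<close> by (simp add: B'_def)
      next
        case True
        have "(\<Sum>b\<in>B'. real_of_rat (c b) * b) = 0" by (rule sum.neutral) (simp add: cz)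
        hence "real_of_rat C = 0" using sumB by simp
        thus ?thesis using True \<open>b \<in> B\<close> by (simp add: C_def)
      qed
    qed
  qed
qed

end
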